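(* Let $n\ge1$ and let $P=a_1+a_2+\dots+a_k$ be a partition of $n$ (an ordered sum of positive integers) with every part $a_i\le 3$. Let $JSMP_n$ be the set of elements of the Jones' monoid $J_n$ for which $P$ is a partition. Then $JSMP_n$ is an idempotent monoid under the operation of $J_n$, i.e. it is a submonoid of $J_n$ in which every element $x$ satisfies $x\cdot x=x$.
   Context: A Kauffman diagram on $2n$ points is a rectangle with $n$ marked points on its upper side and $n$ on its lower side, the $2n$ points being paired by $n$ pairwise non-intersecting strings inside the rectangle, considered up to planar isotopy. The product $AB$ of two diagrams is formed by stacking $A$ on top of $B$ (identifying the lower side of $A$ with the upper side of $B$). The Jones' monoid $J_n$ is the set of Kauffman diagrams on $2n$ points with this concatenation product, where any closed loops arising in a product are simply deleted; its identity is the diagram with $n$ vertical strings. For $j\in J_n$, $P=a_1+\dots+a_k$ is said to be a partition of $j$ if $j$ can be divided by $k-1$ vertical line segments (not crossing any string) into consecutive parts, the $i$-th part containing $a_i$ strings (i.e. $a_i$ upper and $a_i$ lower marked points). *)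

theory Defs
  imports Main
begin

text \<open>Marked points of a Kauffman diagram on 2n points: (Top, i) is the i-th upper
point and (Bot, i) the i-th lower point, counted from the left, 0 \<le> i < n.
A diagram is represented by its pairing of marked points (a symmetric relation);
up to planar isotopy a Kauffman diagram is exactly a non-crossing perfect matching.\<close>

datatype side = Top | Bot

type_synonym point = "side \<times> nat"
type_synonym diagram = "(point \<times> point) set"

definition pts :: "nat \<Rightarrow> point set" where
  "pts n = {(s, i). i < n}"

text \<open>Position of a marked point when walking around the boundary of the rectangle:
upper side left to right, then lower side right to left.\<close>
definition bpos :: "nat \<Rightarrow> point \<Rightarrow> nat" where
  "bpos n p = (case p of (Top, i) \<Rightarrow> i | (Bot, i) \<Rightarrow> 2 * n - 1 - i)"

definition noncrossing :: "nat \<Rightarrow> diagram \<Rightarrow> bool" where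
  "noncrossing n d \<longleftrightarrow>
     (\<forall>a b c e. (a, b) \<in> d \<longrightarrow> (c, e) \<in> d \<longrightarrow>
        \<not> (bpos n a < bpos n c \<and> bpos n c < bpos n b \<and> bpos n b < bpos n e))"

definition jones :: "nat \<Rightarrow> diagram set" where
  "jones n = {d. d \<subseteq> pts n \<times> pts n \<and> sym d \<and> irrefl d
                \<and> (\<forall>p\<in>pts n. \<exists>!q. (p, q) \<in> d) \<and> noncrossing n d}"

definition jid :: "nat \<Rightarrow> diagram" where
  "jid n = {((Top, i), (Bot, i)) | i. i < n} \<union> {((Bot, i), (Top, i)) | i. i < n}"

text \<open>Stacking A on top of B: vertices are (level, index) with level 0 = upper side of A,
level 1 = identified lower side of A / upper side of B, level 2 = lower side of B.\<close>
definition embA :: "point \<Rightarrow> nat \<times> nat" where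
  "embA p = (case p of (Top, i) \<Rightarrow> (0, i) | (Bot, i) \<Rightarrow> (1, i))"

definition embB :: "point \<Rightarrow> nat \<times> nat" where
  "embB p = (case p of (Top, i) \<Rightarrow> (1, i) | (Bot, i) \<Rightarrow> (2, i))"

definition embOut :: "point \<Rightarrow> nat \<times> nat" where
  "embOut p = (case p of (Top, i) \<Rightarrow> (0, i) | (Bot, i) \<Rightarrow> (2, i))"

definition stack_edges :: "diagram \<Rightarrow> diagram \<Rightarrow> ((nat \<times> nat) \<times> (nat \<times> nat)) set" where
  "stack_edges A B = (\<lambda>(p, q). (embA p, embA q)) ` A \<union> (\<lambda>(p, q). (embB p, embB q)) ` B"

text \<open>Product AB: two outer points are paired iff they are joined by a string in the
stacked picture; closed loops (entirely in the middle level) are discarded.\<close>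
definition jmult :: "diagram \<Rightarrow> diagram \<Rightarrow> diagram" where
  "jmult A B = {(p, q). p \<noteq> q \<and> (embOut p, embOut q) \<in> (stack_edges A B)\<^sup>*}"

definition cuts :: "nat list \<Rightarrow> nat set" where
  "cuts P = {sum_list (take m P) | m. 0 < m \<and> m < length P}"

text \<open>P is a partition of d: no string crosses any of the vertical cut lines, i.e. the two
endpoints of every string lie in the same part.\<close>
definition has_partition :: "nat list \<Rightarrow> diagram \<Rightarrow> bool" where
  "has_partition P d \<longleftrightarrow>
     (\<forall>p q c. (p, q) \<in> d \<longrightarrow> c \<in> cuts P \<longrightarrow> (snd p < c \<longleftrightarrow> snd q < c))"

definition JSMP :: "nat \<Rightarrow> nat list \<Rightarrow> diagram set" where
  "JSMP n P = {d \<in> jones n. has_partition P d}"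

end

theory Submission
  imports Defs
begin



fun reachl :: "nat \<Rightarrow> ('v\<times>'v) list \<Rightarrow> 'v list \<Rightarrow> 'v list" where
  "reachl 0 R xs = xs"
| "reachl (Suc k) R xs = reachl k R (remdups (xs @ [b. (a,b) \<leftarrow> R, a \<in> set xs]))"

lemma reachl_sub: "set xs \<subseteq> set (reachl k R xs)"
proof (induction k arbitrary: xs)
  case 0 then show ?case by simp
next
  case (Suc k)
  have 1: "set xs \<subseteq> set (remdups (xs @ [b. (a,b) \<leftarrow> R, a \<in> set xs]))" by (simp only: set_remdups set_append) (rule Un_upper1)
  have 2: "set (remdups (xs @ [b. (a,b) \<leftarrow> R, a \<in> set xs])) \<subseteq> set (reachl k R (remdups (xs @ [b. (a,b) \<leftarrow> R, a \<in> set xs])))" by (rule Suc.IH)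
  show ?case unfolding reachl.simps using 1 2 by (rule subset_trans)
qed

lemma img_rt: "A \<subseteq> r\<^sup>* `` B \<Longrightarrow> r\<^sup>* `` A \<subseteq> r\<^sup>* `` B"
  by (auto intro: rtrancl_trans)

lemma reachl_rt: "set (reachl k R xs) \<subseteq> (set R)\<^sup>* `` set xs"
proof (induction k arbitrary: xs)
  case 0 then show ?case by auto
next
  case (Suc k)
  have "set (remdups (xs @ [b. (a,b) \<leftarrow> R, a \<in> set xs])) \<subseteq> (set R)\<^sup>* `` set xs"
    by auto
  then have "(set R)\<^sup>* `` set (remdups (xs @ [b. (a,b) \<leftarrow> R, a \<in> set xs])) \<subseteq> (set R)\<^sup>* `` set xs"
    by (rule img_rt)
  with Suc.IH show ?case by (simp del: set_remdups set_append) blast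
qed

lemma closed_rt: "(u,v) \<in> r\<^sup>* \<Longrightarrow> u \<in> C \<Longrightarrow> \<forall>(x,y)\<in>r. x \<in> C \<longrightarrow> y \<in> C \<Longrightarrow> v \<in> C"
  by (induction rule: rtrancl_induct) auto

definition sl :: "(point \<times> point) list \<Rightarrow> (point \<times> point) list \<Rightarrow> ((nat\<times>nat)\<times>(nat\<times>nat)) list" where
  "sl la lb = map (\<lambda>(p,q). (embA p, embA q)) la @ map (\<lambda>(p,q).(embB p, embB q)) lb"

lemma set_sl: "set (sl la lb) = stack_edges (set la) (set lb)"
  by (auto simp: sl_def stack_edges_def)

definition rch where "rch R u = reachl (Suc (Suc (Suc (Suc 0)))) R [u]"

fun compsl where
  "compsl R [] = []"
| "compsl R (u#us) = (u, rch R (embOut u)) # compsl R us"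

lemma set_compsl: "set (compsl R us) = (\<lambda>u. (u, rch R (embOut u))) ` set us"
  by (induction us) auto

definition closed_all where
  "closed_all R cs = list_all (\<lambda>(u,c). list_all (\<lambda>(x,y). x \<in> set c \<longrightarrow> y \<in> set c) R) cs"

definition prod_from :: "point list \<Rightarrow> (point \<times> (nat\<times>nat) list) list \<Rightarrow> (point\<times>point) list" where
  "prod_from pl cs = concat (map (\<lambda>(p,c). map (\<lambda>q. (p,q)) (filter (\<lambda>q. q \<noteq> p \<and> embOut q \<in> set c) pl)) cs)"

definition jm_aux where
  "jm_aux pl R cs = (if closed_all R cs then Some (prod_from pl cs) else None)"

definition jm_l where
  "jm_l pl la lb = jm_aux pl (sl la lb) (compsl (sl la lb) pl)"

lemma emb_simps[simp]:
  "embOut (Top,i) = (0,i)" "embOut (Bot,i) = (2,i)"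
  "embA (Top,i) = (0,i)" "embA (Bot,i) = (1,i)"
  "embB (Top,i) = (1,i)" "embB (Bot,i) = (2,i)"
  by (simp_all add: embOut_def embA_def embB_def)

lemma side_cases: "(s::side) = Top \<or> s = Bot" by (cases s) auto

lemma embOut_inj: assumes "embOut p = embOut q" shows "p = q"
proof -
  obtain s i t j where [simp]: "p = (s,i)" "q = (t,j)" by (cases p, cases q) auto
  show ?thesis using assms by (cases s; cases t) auto
qed

lemma snd_emb[simp]: "snd (embOut p) = snd p" "snd (embA p) = snd p" "snd (embB p) = snd p"
proof -
  obtain s i where [simp]: "p = (s,i)" by (cases p) auto
  show "snd (embOut p) = snd p" "snd (embA p) = snd p" "snd (embB p) = snd p" by (cases s; simp)+
qed

lemma pts_iff[simp]: "p \<in> pts a \<longleftrightarrow> snd p < a"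
  by (cases p) (auto simp: pts_def)

lemma stack_snd:
  assumes "A \<subseteq> pts a \<times> pts a" "B \<subseteq> pts a \<times> pts a" "(u,v) \<in> stack_edges A B"
  shows "snd u < a \<and> snd v < a"
  using assms by (auto simp: stack_edges_def)

lemma jmult_pts:
  assumes "A \<subseteq> pts a \<times> pts a" "B \<subseteq> pts a \<times> pts a" "(p,q) \<in> jmult A B"
  shows "p \<in> pts a \<and> q \<in> pts a"
proof -
  have "p \<noteq> q" using assms(3) by (auto simp: jmult_def)
  then have ne: "embOut p \<noteq> embOut q" by (metis embOut_inj)
  have "(embOut p, embOut q) \<in> (stack_edges A B)\<^sup>*" using assms(3) by (auto simp: jmult_def)
  with ne have "(embOut p, embOut q) \<in> (stack_edges A B)\<^sup>+" by (simp add: rtrancl_eq_or_trancl)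
  then obtain w w' where "(embOut p, w) \<in> stack_edges A B" "(w', embOut q) \<in> stack_edges A B"
    by (meson tranclD tranclD2)
  with stack_snd[OF assms(1,2)] show ?thesis by fastforce
qed

lemma set_prod_from: "set (prod_from pl cs) = {(p,q). \<exists>c. (p,c) \<in> set cs \<and> q \<in> set pl \<and> q \<noteq> p \<and> embOut q \<in> set c}"
  by (auto simp: prod_from_def)

lemma jm_l_correct:
  assumes pl: "set pl = pts a" and A: "set la \<subseteq> pts a \<times> pts a" and B: "set lb \<subseteq> pts a \<times> pts a"
    and r: "jm_l pl la lb = Some r"
  shows "jmult (set la) (set lb) = set r"
proof -
  define R where "R = sl la lb"
  define cs where "cs = compsl R pl"
  have cl: "closed_all R cs" and rr: "r = prod_from pl cs"
    using r by (auto simp: jm_l_def jm_aux_def R_def cs_def split: if_splits)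
  have SR: "set R = stack_edges (set la) (set lb)" by (simp add: R_def set_sl)
  have key: "(embOut p, w) \<in> (set R)\<^sup>* \<longleftrightarrow> w \<in> set (rch R (embOut p))"
    if "p \<in> set pl" for p w
  proof
    assume "(embOut p, w) \<in> (set R)\<^sup>*"
    moreover have "embOut p \<in> set (rch R (embOut p))"
      using reachl_sub unfolding rch_def by fastforce
    moreover have "\<forall>(x,y)\<in>set R. x \<in> set (rch R (embOut p))
        \<longrightarrow> y \<in> set (rch R (embOut p))"
      using cl that by (auto simp: closed_all_def cs_def set_compsl list_all_iff)
    ultimately show "w \<in> set (rch R (embOut p))"
      by (rule closed_rt)
  next
    assume "w \<in> set (rch R (embOut p))"
    then show "(embOut p, w) \<in> (set R)\<^sup>*" using reachl_rt unfolding rch_def by fastforce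
  qed
  have rset: "(p,q) \<in> set r \<longleftrightarrow> p \<in> set pl \<and> q \<in> set pl \<and> q \<noteq> p \<and> embOut q \<in> set (rch R (embOut p))" for p q
    by (auto simp: rr set_prod_from cs_def set_compsl)
  show ?thesis
  proof (rule set_eqI, clarify)
    fix p q
    show "(p,q) \<in> jmult (set la) (set lb) \<longleftrightarrow> (p,q) \<in> set r"
    proof
      assume h: "(p,q) \<in> jmult (set la) (set lb)"
      with jmult_pts[OF A B] have pq: "p \<in> set pl" "q \<in> set pl" using pl by auto
      from h have "p \<noteq> q" "(embOut p, embOut q) \<in> (set R)\<^sup>*" by (auto simp: jmult_def SR)
      with pq key show "(p,q) \<in> set r" by (auto simp: rset)
    next
      assume "(p,q) \<in> set r"
      then have "p \<in> set pl" "q \<noteq> p" "embOut q \<in> set (rch R (embOut p))"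
        by (auto simp: rset)
      with key have "p \<noteq> q" "(embOut p, embOut q) \<in> (set R)\<^sup>*" by auto
      then show "(p,q) \<in> jmult (set la) (set lb)" by (simp add: jmult_def SR)
    qed
  qed
qed




definition mk :: "(point \<times> point) list \<Rightarrow> (point \<times> point) list" where
  "mk xs = xs @ map (\<lambda>(p,q). (q,p)) xs"

definition pl1 :: "point list" where "pl1 = [(Top,0),(Bot,0)]"
definition pl2 :: "point list" where "pl2 = [(Top,0),(Top,1),(Bot,0),(Bot,1)]"
definition pl3 :: "point list" where "pl3 = [(Top,0),(Top,1),(Top,2),(Bot,0),(Bot,1),(Bot,2)]"

lemma set_pl: "set pl1 = pts 1" "set pl2 = pts 2" "set pl3 = pts 3"
proof -
  have *: "\<And>a p. p \<in> pts a \<longleftrightarrow> snd p < a" by simp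
  have s: "\<And>x::side. x = Top \<or> x = Bot" using side_cases by blast
  show "set pl1 = pts 1" unfolding pl1_def by (auto simp: *) (metis s)
  show "set pl2 = pts 2" unfolding pl2_def by (auto simp: * less_Suc_eq numeral_2_eq_2) (metis s)+
  show "set pl3 = pts 3" unfolding pl3_def by (auto simp: * less_Suc_eq numeral_3_eq_3) (metis s)+
qed

definition L1 :: "(point \<times> point) list list" where
  "L1 = [mk [((Top,0),(Bot,0))]]"
definition L2 :: "(point \<times> point) list list" where
  "L2 = [mk [((Top,0),(Bot,0)),((Top,1),(Bot,1))], mk [((Top,0),(Top,1)),((Bot,0),(Bot,1))]]"
definition L3 :: "(point \<times> point) list list" where
  "L3 = [mk [((Top,0),(Bot,0)),((Top,1),(Bot,1)),((Top,2),(Bot,2))],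
         mk [((Top,0),(Top,1)),((Bot,0),(Bot,1)),((Top,2),(Bot,2))],
         mk [((Top,1),(Top,2)),((Bot,1),(Bot,2)),((Top,0),(Bot,0))],
         mk [((Top,0),(Top,1)),((Bot,1),(Bot,2)),((Top,2),(Bot,0))],
         mk [((Top,1),(Top,2)),((Bot,0),(Bot,1)),((Top,0),(Bot,2))]]"

definition seteq :: "'a list \<Rightarrow> 'a list \<Rightarrow> bool" where
  "seteq xs ys = (list_all (\<lambda>x. x \<in> set ys) xs \<and> list_all (\<lambda>y. y \<in> set xs) ys)"

lemma seteq_set: "seteq xs ys \<Longrightarrow> set xs = set ys"
  by (auto simp: seteq_def list_all_iff)

fun allrow :: "('a \<Rightarrow> 'b \<Rightarrow> bool) \<Rightarrow> 'a \<Rightarrow> 'b list \<Rightarrow> bool" where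
  "allrow f x [] = True"
| "allrow f x (y#ys) = (f x y \<and> allrow f x ys)"

fun allp :: "('a \<Rightarrow> 'b \<Rightarrow> bool) \<Rightarrow> 'a list \<Rightarrow> 'b list \<Rightarrow> bool" where
  "allp f [] ys = True"
| "allp f (x#xs) ys = (allrow f x ys \<and> allp f xs ys)"

fun alld :: "('a \<Rightarrow> bool) \<Rightarrow> 'a list \<Rightarrow> bool" where
  "alld f [] = True"
| "alld f (x#xs) = (f x \<and> alld f xs)"

lemma allrow_iff: "allrow f x ys = (\<forall>y\<in>set ys. f x y)" by (induction ys) auto
lemma allp_iff: "allp f xs ys = (\<forall>x\<in>set xs. \<forall>y\<in>set ys. f x y)" by (induction xs) (auto simp: allrow_iff)
lemma alld_iff: "alld f xs = (\<forall>x\<in>set xs. f x)" by (induction xs) auto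

definition pchk :: "point list \<Rightarrow> (point \<times> point) list list \<Rightarrow> (point \<times> point) list \<Rightarrow> (point \<times> point) list \<Rightarrow> bool" where
  "pchk pl L D1 D2 = (case jm_l pl D1 D2 of None \<Rightarrow> False | Some r \<Rightarrow> list_ex (\<lambda>D3. seteq r D3) L)"

definition ichk :: "point list \<Rightarrow> (point \<times> point) list \<Rightarrow> bool" where
  "ichk pl D = (case jm_l pl D D of None \<Rightarrow> False | Some r \<Rightarrow> seteq r D)"

definition jones_chk :: "nat \<Rightarrow> point list \<Rightarrow> (point \<times> point) list \<Rightarrow> bool" where
  "jones_chk a pl D = (list_all (\<lambda>(p,q). p \<in> set pl \<and> q \<in> set pl \<and> p \<noteq> q \<and> (q,p) \<in> set D) D
     \<and> list_all (\<lambda>p. length (remdups (map snd (filter (\<lambda>pq. fst pq = p) D))) = 1) pl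
     \<and> list_all (\<lambda>(p1,q1). list_all (\<lambda>(p2,q2). \<not>(bpos a p1 < bpos a p2 \<and> bpos a p2 < bpos a q1 \<and> bpos a q1 < bpos a q2)) D) D)"

lemma len_remdups_1: "length (remdups xs) = 1 \<Longrightarrow> \<exists>x. set xs = {x}"
  by (metis card_1_singletonE card_set)

lemma jones_chk_correct:
  assumes pl: "set pl = pts a" and c: "jones_chk a pl D"
  shows "set D \<in> jones a"
proof -
  from c have c1: "\<forall>(p,q)\<in>set D. p \<in> set pl \<and> q \<in> set pl \<and> p \<noteq> q \<and> (q,p) \<in> set D"
    and c2: "\<forall>p\<in>set pl. length (remdups (map snd (filter (\<lambda>pq. fst pq = p) D))) = 1"
    and c3: "\<forall>(p1,q1)\<in>set D. \<forall>(p2,q2)\<in>set D. \<not>(bpos a p1 < bpos a p2 \<and> bpos a p2 < bpos a q1 \<and> bpos a q1 < bpos a q2)"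
    by (auto simp: jones_chk_def list_all_iff)
  have sub: "set D \<subseteq> pts a \<times> pts a" using c1 pl by auto
  have sy: "sym (set D)" using c1 by (auto simp: sym_def)
  have ir: "irrefl (set D)" using c1 by (auto simp: irrefl_def)
  have un: "\<exists>!q. (p,q) \<in> set D" if "p \<in> pts a" for p
  proof -
    have "p \<in> set pl" using that pl by simp
    then have "length (remdups (map snd (filter (\<lambda>pq. fst pq = p) D))) = 1" using c2 by blast
    then obtain x where x: "set (map snd (filter (\<lambda>pq. fst pq = p) D)) = {x}"
      using len_remdups_1 by blast
    have "(p,q) \<in> set D \<longleftrightarrow> q \<in> set (map snd (filter (\<lambda>pq. fst pq = p) D))" for q
      by (induction D) auto
    then have xq: "\<And>q. (p,q) \<in> set D \<longleftrightarrow> q = x" using x by simp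
    show ?thesis
    proof (rule ex1I[of _ x])
      show "(p,x) \<in> set D" using xq[of x] by simp
    next
      fix q assume "(p,q) \<in> set D" then show "q = x" using xq[of q] by simp
    qed
  qed
  have nc: "noncrossing a (set D)" using c3 by (auto simp: noncrossing_def)
  show ?thesis using sub sy ir un nc by (auto simp: jones_def)
qed

lemma jones_L: "list_all (jones_chk 1 pl1) L1" "list_all (jones_chk 2 pl2) L2" "list_all (jones_chk 3 pl3) L3"
  by (simp_all add: jones_chk_def L1_def L2_def L3_def pl1_def pl2_def pl3_def mk_def bpos_def)

lemma clos_L: "allp (pchk pl1 L1) L1 L1" "allp (pchk pl2 L2) L2 L2" "allp (pchk pl3 L3) L3 L3"
  by (simp_all add: pchk_def jm_l_def jm_aux_def closed_all_def prod_from_def rch_def seteq_def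
     sl_def L1_def L2_def L3_def pl1_def pl2_def pl3_def mk_def)

lemma idem_L: "alld (ichk pl1) L1" "alld (ichk pl2) L2" "alld (ichk pl3) L3"
  by (simp_all add: ichk_def jm_l_def jm_aux_def closed_all_def prod_from_def rch_def seteq_def
     sl_def L1_def L2_def L3_def pl1_def pl2_def pl3_def mk_def)



lemma bpos_simps[simp]: "bpos a (Top,i) = i" "bpos a (Bot,i) = 2*a - 1 - i"
  by (simp_all add: bpos_def)

lemma enum1:
  fixes f :: "point \<Rightarrow> point"
  assumes Ft: "\<And>p. p \<in> set pl1 \<Longrightarrow> f p \<in> set pl1 \<and> f p \<noteq> p \<and> f (f p) = p"
    and N: "\<And>p q. p \<in> set pl1 \<Longrightarrow> q \<in> set pl1 \<Longrightarrow> \<not>(bpos 1 p < bpos 1 q \<and> bpos 1 q < bpos 1 (f p) \<and> bpos 1 (f p) < bpos 1 (f q))"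
  shows "list_ex (\<lambda>D. seteq (map (\<lambda>p. (p, f p)) pl1) D) L1"
proof -
  have P: "(Top,0) \<in> set pl1" "(Bot,0) \<in> set pl1"
    by (simp_all add: pl1_def)
  have V: "\<And>x. x \<in> set pl1 \<Longrightarrow> (f x = (Top,0) \<or> f x = (Bot,0)) \<and> f x \<noteq> x \<and> f (f x) = x"
    using Ft by (auto simp: pl1_def)
  have e1a: "f (Top,0) = (Bot,0)" using V[of "(Top,0)"] P  by auto
  have e1b: "f (Bot,0) = (Top,0)" using V[of "(Top,0)"] P e1a by auto
  show ?thesis using e1a e1b by (simp add: pl1_def L1_def mk_def seteq_def)
qed

lemma enum2:
  fixes f :: "point \<Rightarrow> point"
  assumes Ft: "\<And>p. p \<in> set pl2 \<Longrightarrow> f p \<in> set pl2 \<and> f p \<noteq> p \<and> f (f p) = p"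
    and N: "\<And>p q. p \<in> set pl2 \<Longrightarrow> q \<in> set pl2 \<Longrightarrow> \<not>(bpos 2 p < bpos 2 q \<and> bpos 2 q < bpos 2 (f p) \<and> bpos 2 (f p) < bpos 2 (f q))"
  shows "list_ex (\<lambda>D. seteq (map (\<lambda>p. (p, f p)) pl2) D) L2"
proof -
  have P: "(Top,0) \<in> set pl2" "(Top,1) \<in> set pl2" "(Bot,0) \<in> set pl2" "(Bot,1) \<in> set pl2"
    by (simp_all add: pl2_def)
  have V: "\<And>x. x \<in> set pl2 \<Longrightarrow> (f x = (Top,0) \<or> f x = (Top,1) \<or> f x = (Bot,0) \<or> f x = (Bot,1)) \<and> f x \<noteq> x \<and> f (f x) = x"
    using Ft by (auto simp: pl2_def)
  have "f (Top,0) = (Top,1) \<or> f (Top,0) = (Bot,0) \<or> f (Top,0) = (Bot,1)" using V[of "(Top,0)"] P  by auto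
  then show ?thesis
  proof (elim disjE)
    assume e1a: "f (Top,0) = (Top,1)"
    have e1b: "f (Top,1) = (Top,0)" using V[of "(Top,0)"] P e1a by auto
    have e2a: "f (Bot,0) = (Bot,1)" using V[of "(Bot,0)"] P e1a e1b by auto
    have e2b: "f (Bot,1) = (Bot,0)" using V[of "(Bot,0)"] P e2a by auto
    show ?thesis using e1a e1b e2a e2b by (simp add: pl2_def L2_def mk_def seteq_def)
  next
    assume e3a: "f (Top,0) = (Bot,0)"
    have e3b: "f (Bot,0) = (Top,0)" using V[of "(Top,0)"] P e3a by auto
    have e4a: "f (Top,1) = (Bot,1)" using V[of "(Top,1)"] P e3a e3b by auto
    have e4b: "f (Bot,1) = (Top,1)" using V[of "(Top,1)"] P e4a by auto
    show ?thesis using e3a e3b e4a e4b by (simp add: pl2_def L2_def mk_def seteq_def)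
  next
    assume e5a: "f (Top,0) = (Bot,1)"
    have e5b: "f (Bot,1) = (Top,0)" using V[of "(Top,0)"] P e5a by auto
    have e6a: "f (Top,1) = (Bot,0)" using V[of "(Top,1)"] P e5a e5b by auto
    have e6b: "f (Bot,0) = (Top,1)" using V[of "(Top,1)"] P e6a by auto
    show ?thesis using N[of "(Top,0)" "(Top,1)"] P e5a e5b e6a e6b by simp
  qed
qed

lemma enum3:
  fixes f :: "point \<Rightarrow> point"
  assumes Ft: "\<And>p. p \<in> set pl3 \<Longrightarrow> f p \<in> set pl3 \<and> f p \<noteq> p \<and> f (f p) = p"
    and N: "\<And>p q. p \<in> set pl3 \<Longrightarrow> q \<in> set pl3 \<Longrightarrow> \<not>(bpos 3 p < bpos 3 q \<and> bpos 3 q < bpos 3 (f p) \<and> bpos 3 (f p) < bpos 3 (f q))"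
  shows "list_ex (\<lambda>D. seteq (map (\<lambda>p. (p, f p)) pl3) D) L3"
proof -
  have P: "(Top,0) \<in> set pl3" "(Top,1) \<in> set pl3" "(Top,2) \<in> set pl3" "(Bot,0) \<in> set pl3" "(Bot,1) \<in> set pl3" "(Bot,2) \<in> set pl3"
    by (simp_all add: pl3_def)
  have V: "\<And>x. x \<in> set pl3 \<Longrightarrow> (f x = (Top,0) \<or> f x = (Top,1) \<or> f x = (Top,2) \<or> f x = (Bot,0) \<or> f x = (Bot,1) \<or> f x = (Bot,2)) \<and> f x \<noteq> x \<and> f (f x) = x"
    using Ft by (auto simp: pl3_def)
  have "f (Top,0) = (Top,1) \<or> f (Top,0) = (Top,2) \<or> f (Top,0) = (Bot,0) \<or> f (Top,0) = (Bot,1) \<or> f (Top,0) = (Bot,2)" using V[of "(Top,0)"] P  by auto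
  then show ?thesis
  proof (elim disjE)
    assume e1a: "f (Top,0) = (Top,1)"
    have e1b: "f (Top,1) = (Top,0)" using V[of "(Top,0)"] P e1a by auto
    have "f (Top,2) = (Bot,0) \<or> f (Top,2) = (Bot,1) \<or> f (Top,2) = (Bot,2)" using V[of "(Top,2)"] P e1a e1b by auto
    then show ?thesis
    proof (elim disjE)
      assume e2a: "f (Top,2) = (Bot,0)"
      have e2b: "f (Bot,0) = (Top,2)" using V[of "(Top,2)"] P e2a by auto
      have e3a: "f (Bot,1) = (Bot,2)" using V[of "(Bot,1)"] P e1a e1b e2a e2b by auto
      have e3b: "f (Bot,2) = (Bot,1)" using V[of "(Bot,1)"] P e3a by auto
      show ?thesis using e1a e1b e2a e2b e3a e3b by (simp add: pl3_def L3_def mk_def seteq_def)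
    next
      assume e4a: "f (Top,2) = (Bot,1)"
      have e4b: "f (Bot,1) = (Top,2)" using V[of "(Top,2)"] P e4a by auto
      have e5a: "f (Bot,0) = (Bot,2)" using V[of "(Bot,0)"] P e1a e1b e4a e4b by auto
      have e5b: "f (Bot,2) = (Bot,0)" using V[of "(Bot,0)"] P e5a by auto
      show ?thesis using N[of "(Top,2)" "(Bot,2)"] P e1a e1b e4a e4b e5a e5b by simp
    next
      assume e6a: "f (Top,2) = (Bot,2)"
      have e6b: "f (Bot,2) = (Top,2)" using V[of "(Top,2)"] P e6a by auto
      have e7a: "f (Bot,0) = (Bot,1)" using V[of "(Bot,0)"] P e1a e1b e6a e6b by auto
      have e7b: "f (Bot,1) = (Bot,0)" using V[of "(Bot,0)"] P e7a by auto
      show ?thesis using e1a e1b e6a e6b e7a e7b by (simp add: pl3_def L3_def mk_def seteq_def)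
    qed
  next
    assume e8a: "f (Top,0) = (Top,2)"
    have e8b: "f (Top,2) = (Top,0)" using V[of "(Top,0)"] P e8a by auto
    have "f (Top,1) = (Bot,0) \<or> f (Top,1) = (Bot,1) \<or> f (Top,1) = (Bot,2)" using V[of "(Top,1)"] P e8a e8b by auto
    then show ?thesis
    proof (elim disjE)
      assume e9a: "f (Top,1) = (Bot,0)"
      have e9b: "f (Bot,0) = (Top,1)" using V[of "(Top,1)"] P e9a by auto
      show ?thesis using N[of "(Top,0)" "(Top,1)"] P e8a e8b e9a e9b by simp
    next
      assume e10a: "f (Top,1) = (Bot,1)"
      have e10b: "f (Bot,1) = (Top,1)" using V[of "(Top,1)"] P e10a by auto
      show ?thesis using N[of "(Top,0)" "(Top,1)"] P e8a e8b e10a e10b by simp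
    next
      assume e11a: "f (Top,1) = (Bot,2)"
      have e11b: "f (Bot,2) = (Top,1)" using V[of "(Top,1)"] P e11a by auto
      show ?thesis using N[of "(Top,0)" "(Top,1)"] P e8a e8b e11a e11b by simp
    qed
  next
    assume e12a: "f (Top,0) = (Bot,0)"
    have e12b: "f (Bot,0) = (Top,0)" using V[of "(Top,0)"] P e12a by auto
    have "f (Top,1) = (Top,2) \<or> f (Top,1) = (Bot,1) \<or> f (Top,1) = (Bot,2)" using V[of "(Top,1)"] P e12a e12b by auto
    then show ?thesis
    proof (elim disjE)
      assume e13a: "f (Top,1) = (Top,2)"
      have e13b: "f (Top,2) = (Top,1)" using V[of "(Top,1)"] P e13a by auto
      have e14a: "f (Bot,1) = (Bot,2)" using V[of "(Bot,1)"] P e12a e12b e13a e13b by auto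
      have e14b: "f (Bot,2) = (Bot,1)" using V[of "(Bot,1)"] P e14a by auto
      show ?thesis using e12a e12b e13a e13b e14a e14b by (simp add: pl3_def L3_def mk_def seteq_def)
    next
      assume e15a: "f (Top,1) = (Bot,1)"
      have e15b: "f (Bot,1) = (Top,1)" using V[of "(Top,1)"] P e15a by auto
      have e16a: "f (Top,2) = (Bot,2)" using V[of "(Top,2)"] P e12a e12b e15a e15b by auto
      have e16b: "f (Bot,2) = (Top,2)" using V[of "(Top,2)"] P e16a by auto
      show ?thesis using e12a e12b e15a e15b e16a e16b by (simp add: pl3_def L3_def mk_def seteq_def)
    next
      assume e17a: "f (Top,1) = (Bot,2)"
      have e17b: "f (Bot,2) = (Top,1)" using V[of "(Top,1)"] P e17a by auto
      have e18a: "f (Top,2) = (Bot,1)" using V[of "(Top,2)"] P e12a e12b e17a e17b by auto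
      have e18b: "f (Bot,1) = (Top,2)" using V[of "(Top,2)"] P e18a by auto
      show ?thesis using N[of "(Top,1)" "(Top,2)"] P e12a e12b e17a e17b e18a e18b by simp
    qed
  next
    assume e19a: "f (Top,0) = (Bot,1)"
    have e19b: "f (Bot,1) = (Top,0)" using V[of "(Top,0)"] P e19a by auto
    have "f (Top,1) = (Top,2) \<or> f (Top,1) = (Bot,0) \<or> f (Top,1) = (Bot,2)" using V[of "(Top,1)"] P e19a e19b by auto
    then show ?thesis
    proof (elim disjE)
      assume e20a: "f (Top,1) = (Top,2)"
      have e20b: "f (Top,2) = (Top,1)" using V[of "(Top,1)"] P e20a by auto
      have e21a: "f (Bot,0) = (Bot,2)" using V[of "(Bot,0)"] P e19a e19b e20a e20b by auto
      have e21b: "f (Bot,2) = (Bot,0)" using V[of "(Bot,0)"] P e21a by auto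
      show ?thesis using N[of "(Top,0)" "(Bot,2)"] P e19a e19b e20a e20b e21a e21b by simp
    next
      assume e22a: "f (Top,1) = (Bot,0)"
      have e22b: "f (Bot,0) = (Top,1)" using V[of "(Top,1)"] P e22a by auto
      show ?thesis using N[of "(Top,0)" "(Top,1)"] P e19a e19b e22a e22b by simp
    next
      assume e23a: "f (Top,1) = (Bot,2)"
      have e23b: "f (Bot,2) = (Top,1)" using V[of "(Top,1)"] P e23a by auto
      have e24a: "f (Top,2) = (Bot,0)" using V[of "(Top,2)"] P e19a e19b e23a e23b by auto
      have e24b: "f (Bot,0) = (Top,2)" using V[of "(Top,2)"] P e24a by auto
      show ?thesis using N[of "(Top,0)" "(Top,2)"] P e19a e19b e23a e23b e24a e24b by simp
    qed
  next
    assume e25a: "f (Top,0) = (Bot,2)"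
    have e25b: "f (Bot,2) = (Top,0)" using V[of "(Top,0)"] P e25a by auto
    have "f (Top,1) = (Top,2) \<or> f (Top,1) = (Bot,0) \<or> f (Top,1) = (Bot,1)" using V[of "(Top,1)"] P e25a e25b by auto
    then show ?thesis
    proof (elim disjE)
      assume e26a: "f (Top,1) = (Top,2)"
      have e26b: "f (Top,2) = (Top,1)" using V[of "(Top,1)"] P e26a by auto
      have e27a: "f (Bot,0) = (Bot,1)" using V[of "(Bot,0)"] P e25a e25b e26a e26b by auto
      have e27b: "f (Bot,1) = (Bot,0)" using V[of "(Bot,0)"] P e27a by auto
      show ?thesis using e25a e25b e26a e26b e27a e27b by (simp add: pl3_def L3_def mk_def seteq_def)
    next
      assume e28a: "f (Top,1) = (Bot,0)"
      have e28b: "f (Bot,0) = (Top,1)" using V[of "(Top,1)"] P e28a by auto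
      show ?thesis using N[of "(Top,0)" "(Top,1)"] P e25a e25b e28a e28b by simp
    next
      assume e29a: "f (Top,1) = (Bot,1)"
      have e29b: "f (Bot,1) = (Top,1)" using V[of "(Top,1)"] P e29a by auto
      show ?thesis using N[of "(Top,0)" "(Top,1)"] P e25a e25b e29a e29b by simp
    qed
  qed
qed




definition partner :: "diagram \<Rightarrow> point \<Rightarrow> point" where
  "partner d p = (THE q. (p,q) \<in> d)"

lemma partner_props:
  assumes d: "d \<in> jones a"
  shows "\<And>p. p \<in> pts a \<Longrightarrow> (p, partner d p) \<in> d"
    and "\<And>p q. (p,q) \<in> d \<Longrightarrow> q = partner d p"
    and "\<And>p q. (p,q) \<in> d \<Longrightarrow> p \<in> pts a \<and> q \<in> pts a"
    and "\<And>p q. (p,q) \<in> d \<Longrightarrow> (q,p) \<in> d"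
    and "\<And>p. (p,p) \<notin> d"
proof -
  have sub: "d \<subseteq> pts a \<times> pts a" and sy: "sym d" and ir: "irrefl d"
    and un: "\<forall>p\<in>pts a. \<exists>!q. (p,q) \<in> d" using d by (auto simp: jones_def)
  show 3: "\<And>p q. (p,q) \<in> d \<Longrightarrow> p \<in> pts a \<and> q \<in> pts a" using sub by blast
  show "(p, partner d p) \<in> d" if "p \<in> pts a" for p
  proof -
    have "\<exists>!q. (p,q) \<in> d" using un that by blast
    then show ?thesis unfolding partner_def by (rule theI')
  qed
  show "q = partner d p" if h: "(p,q) \<in> d" for p q
  proof -
    have "p \<in> pts a" using 3 h by blast
    then have "\<exists>!q. (p,q) \<in> d" using un by blast
    then show ?thesis unfolding partner_def using h by (rule the1_equality[symmetric])
  qed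
  show "\<And>p q. (p,q) \<in> d \<Longrightarrow> (q,p) \<in> d" using sy by (auto simp: sym_def)
  show "\<And>p. (p,p) \<notin> d" using ir by (auto simp: irrefl_def)
qed

lemma jones_as_list:
  assumes d: "d \<in> jones a" and pl: "set pl = pts a"
  shows "d = set (map (\<lambda>p. (p, partner d p)) pl)"
    and "\<And>p. p \<in> set pl \<Longrightarrow> partner d p \<in> set pl \<and> partner d p \<noteq> p \<and> partner d (partner d p) = p"
    and "\<And>p q. p \<in> set pl \<Longrightarrow> q \<in> set pl \<Longrightarrow> \<not>(bpos a p < bpos a q \<and> bpos a q < bpos a (partner d p) \<and> bpos a (partner d p) < bpos a (partner d q))"
proof -
  note P = partner_props[OF d]
  show "d = set (map (\<lambda>p. (p, partner d p)) pl)"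
  proof (rule set_eqI, clarify)
    fix p q
    show "(p,q) \<in> d \<longleftrightarrow> (p,q) \<in> set (map (\<lambda>p. (p, partner d p)) pl)"
    proof
      assume h: "(p,q) \<in> d"
      then have "p \<in> set pl" "q = partner d p" using P(2,3) pl by auto
      then show "(p,q) \<in> set (map (\<lambda>p. (p, partner d p)) pl)" by auto
    next
      assume "(p,q) \<in> set (map (\<lambda>p. (p, partner d p)) pl)"
      then have "p \<in> pts a" "q = partner d p" using pl by auto
      then show "(p,q) \<in> d" using P(1) by simp
    qed
  qed
  show "\<And>p. p \<in> set pl \<Longrightarrow> partner d p \<in> set pl \<and> partner d p \<noteq> p \<and> partner d (partner d p) = p"
  proof -
    fix p assume "p \<in> set pl"
    then have h: "(p, partner d p) \<in> d" using P(1) pl by simp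
    then have "partner d p \<in> set pl" using P(3) pl by blast
    moreover have "partner d p \<noteq> p" using h P(5) by metis
    moreover have "partner d (partner d p) = p" using P(4)[OF h] P(2) by metis
    ultimately show "partner d p \<in> set pl \<and> partner d p \<noteq> p \<and> partner d (partner d p) = p" by blast
  qed
  show "\<And>p q. p \<in> set pl \<Longrightarrow> q \<in> set pl \<Longrightarrow> \<not>(bpos a p < bpos a q \<and> bpos a q < bpos a (partner d p) \<and> bpos a (partner d p) < bpos a (partner d q))"
  proof -
    fix p q assume "p \<in> set pl" "q \<in> set pl"
    then have "(p, partner d p) \<in> d" "(q, partner d q) \<in> d" using P(1) pl by auto
    moreover have "noncrossing a d" using d by (simp add: jones_def)
    ultimately show "\<not>(bpos a p < bpos a q \<and> bpos a q < bpos a (partner d p) \<and> bpos a (partner d p) < bpos a (partner d q))"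
      unfolding noncrossing_def by blast
  qed
qed

lemma enum_L:
  assumes "d \<in> jones a" and pl: "set pl = pts a"
    and E: "\<And>f. (\<And>p. p \<in> set pl \<Longrightarrow> f p \<in> set pl \<and> f p \<noteq> p \<and> f (f p) = p) \<Longrightarrow>
       (\<And>p q. p \<in> set pl \<Longrightarrow> q \<in> set pl \<Longrightarrow> \<not>(bpos a p < bpos a q \<and> bpos a q < bpos a (f p) \<and> bpos a (f p) < bpos a (f q)))
       \<Longrightarrow> list_ex (\<lambda>D. seteq (map (\<lambda>p. (p, f p)) pl) D) L"
  shows "\<exists>D\<in>set L. d = set D"
proof -
  have "list_ex (\<lambda>D. seteq (map (\<lambda>p. (p, partner d p)) pl) D) L"
    by (rule E) (use jones_as_list[OF assms(1,2)] in auto)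
  then obtain D where "D \<in> set L" "set (map (\<lambda>p. (p, partner d p)) pl) = set D"
    by (auto simp: list_ex_iff dest: seteq_set)
  then show ?thesis using jones_as_list(1)[OF assms(1,2)] by auto
qed

lemma local_monoid:
  assumes a: "1 \<le> a" "a \<le> 3" and d1: "d1 \<in> jones a" and d2: "d2 \<in> jones a"
  shows "jmult d1 d2 \<in> jones a \<and> jmult d1 d1 = d1"
proof -
  have "\<exists>pl L. set pl = pts a \<and> allp (pchk pl L) L L \<and> alld (ichk pl) L \<and> list_all (jones_chk a pl) L
     \<and> (\<forall>d\<in>jones a. \<exists>D\<in>set L. d = set D)"
  proof -
    have "a = 1 \<or> a = 2 \<or> a = 3" using a by auto
    then show ?thesis
    proof (elim disjE)
      assume h: "a = 1"
      have "\<forall>d\<in>jones 1. \<exists>D\<in>set L1. d = set D" using enum_L[OF _ set_pl(1) enum1] by blast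
      then show ?thesis using h set_pl(1) clos_L(1) idem_L(1) jones_L(1) by blast
    next
      assume h: "a = 2"
      have "\<forall>d\<in>jones 2. \<exists>D\<in>set L2. d = set D" using enum_L[OF _ set_pl(2) enum2] by blast
      then show ?thesis using h set_pl(2) clos_L(2) idem_L(2) jones_L(2) by blast
    next
      assume h: "a = 3"
      have "\<forall>d\<in>jones 3. \<exists>D\<in>set L3. d = set D" using enum_L[OF _ set_pl(3) enum3] by blast
      then show ?thesis using h set_pl(3) clos_L(3) idem_L(3) jones_L(3) by blast
    qed
  qed
  then obtain pl L where pl: "set pl = pts a" and cl: "allp (pchk pl L) L L" and id: "alld (ichk pl) L"
    and jc: "list_all (jones_chk a pl) L" and en: "\<forall>d\<in>jones a. \<exists>D\<in>set L. d = set D" by blast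
  obtain D1 where D1: "D1 \<in> set L" "d1 = set D1" using en d1 by blast
  obtain D2 where D2: "D2 \<in> set L" "d2 = set D2" using en d2 by blast
  have s1: "set D1 \<subseteq> pts a \<times> pts a" using d1 D1 by (auto simp: jones_def)
  have s2: "set D2 \<subseteq> pts a \<times> pts a" using d2 D2 by (auto simp: jones_def)
  have "pchk pl L D1 D2" using cl D1 D2 by (simp add: allp_iff)
  then obtain r D3 where r: "jm_l pl D1 D2 = Some r" and D3: "D3 \<in> set L" "seteq r D3"
    by (auto simp: pchk_def list_ex_iff split: option.splits)
  have "jmult d1 d2 = set D3" using jm_l_correct[OF pl s1 s2 r] seteq_set[OF D3(2)] D1 D2 by simp
  moreover have "set D3 \<in> jones a" using jones_chk_correct[OF pl] jc D3(1) by (simp add: list_all_iff)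
  moreover have "ichk pl D1" using id D1 by (simp add: alld_iff)
  then obtain r' where r': "jm_l pl D1 D1 = Some r'" "seteq r' D1"
    by (auto simp: ichk_def split: option.splits)
  then have "jmult d1 d1 = d1" using jm_l_correct[OF pl s1 s1 r'(1)] seteq_set[OF r'(2)] D1 by simp
  ultimately show ?thesis by simp
qed




section \<open>Blocks\<close>

definition sameblk :: "nat list \<Rightarrow> nat \<Rightarrow> nat \<Rightarrow> bool" where
  "sameblk P i j = (\<forall>c\<in>cuts P. (i < c \<longleftrightarrow> j < c))"

definition blk :: "nat list \<Rightarrow> nat \<Rightarrow> nat \<Rightarrow> nat \<Rightarrow> bool" where
  "blk P n s a = (1 \<le> a \<and> a \<le> 3 \<and> s + a \<le> n \<and>
     (\<forall>i j. s \<le> i \<longrightarrow> i < s + a \<longrightarrow> j < n \<longrightarrow> (sameblk P i j \<longleftrightarrow> (s \<le> j \<and> j < s + a))))"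

lemma cuts_Cons: "cuts (x # P') = (\<lambda>m. x + sum_list (take m P')) ` {m. m < length P'}"
proof -
  have "cuts (x # P') = (\<lambda>m. sum_list (take m (x # P'))) ` {m. 0 < m \<and> m < Suc (length P')}"
    by (auto simp: cuts_def)
  also have "{m. 0 < m \<and> m < Suc (length P')} = Suc ` {m. m < length P'}"
    by (auto simp: image_iff) (metis Suc_less_eq gr0_conv_Suc)
  finally show ?thesis by (simp add: image_image)
qed

lemma cuts_Cons2: "P' \<noteq> [] \<Longrightarrow> cuts (x # P') = insert x ((+) x ` cuts P')"
proof -
  assume ne: "P' \<noteq> []"
  have "cuts P' = (\<lambda>m. sum_list (take m P')) ` {m. 0 < m \<and> m < length P'}"
    by (auto simp: cuts_def)
  moreover have "{m. m < length P'} = insert 0 {m. 0 < m \<and> m < length P'}"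
    using ne by auto
  ultimately show ?thesis by (simp add: cuts_Cons image_image)
qed

lemma cuts_single: "cuts [x] = {}"
  by (simp add: cuts_Cons)

lemma sameblk_Cons:
  assumes "P' \<noteq> []" "x \<le> i" "x \<le> j"
  shows "sameblk (x # P') i j = sameblk P' (i - x) (j - x)"
proof -
  have "(\<forall>c\<in>cuts P'. (i < x + c \<longleftrightarrow> j < x + c)) = (\<forall>c\<in>cuts P'. (i - x < c \<longleftrightarrow> j - x < c))"
    using assms(2,3) by (metis add.commute less_diff_conv2)
  then show ?thesis using assms by (simp add: sameblk_def cuts_Cons2)
qed

lemma blocks_exist:
  "(\<forall>a\<in>set P. 1 \<le> a \<and> a \<le> 3) \<Longrightarrow> sum_list P = n \<Longrightarrow> i < n \<Longrightarrow>
    \<exists>s a. blk P n s a \<and> s \<le> i \<and> i < s + a"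
proof (induction P arbitrary: n i)
  case Nil then show ?case by simp
next
  case (Cons x P')
  show ?case
  proof (cases "P' = []")
    case True
    then have "n = x" using Cons by simp
    then have "blk (x # P') n 0 x" using Cons.prems(1) True by (simp add: blk_def sameblk_def cuts_single)
    then show ?thesis using Cons.prems(3) \<open>n = x\<close> by force
  next
    case ne: False
    have x13: "1 \<le> x" "x \<le> 3" using Cons.prems(1) by auto
    have n: "n = x + sum_list P'" using Cons.prems(2) by simp
    show ?thesis
    proof (cases "i < x")
      case True
      have "sameblk (x # P') i' j \<longleftrightarrow> j < x" if "i' < x" "j < n" for i' j
      proof -
        have "\<forall>c\<in>cuts P'. (i' < x + c \<longleftrightarrow> j < x + c)" if "j < x" using \<open>i' < x\<close> that by auto
        then show ?thesis using \<open>i' < x\<close> by (auto simp: sameblk_def cuts_Cons2[OF ne])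
      qed
      then have "blk (x # P') n 0 x" using x13 n by (simp add: blk_def)
      then show ?thesis using True by force
    next
      case False
      have "i - x < sum_list P'" using Cons.prems(3) n False by simp
      from Cons.IH[OF _ refl this] Cons.prems(1) obtain s a where
        b: "blk P' (sum_list P') s a" "s \<le> i - x" "i - x < s + a" by auto
      have bb: "\<And>i j. s \<le> i \<Longrightarrow> i < s+a \<Longrightarrow> j < sum_list P' \<Longrightarrow> sameblk P' i j = (s \<le> j \<and> j < s+a)"
        using b(1) by (simp add: blk_def)
      have "blk (x # P') n (s + x) a"
        unfolding blk_def
      proof (intro conjI allI impI)
        show "1 \<le> a" "a \<le> 3" using b(1) by (auto simp: blk_def)
        show "s + x + a \<le> n" using b(1) n by (auto simp: blk_def)
        fix i' j assume h: "s + x \<le> i'" "i' < s + x + a" "j < n"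
        show "sameblk (x # P') i' j = (s + x \<le> j \<and> j < s + x + a)"
        proof (cases "j < x")
          case True
          have "x \<in> cuts (x # P')" using ne by (simp add: cuts_Cons2)
          moreover have "\<not> (i' < x \<longleftrightarrow> j < x)" using True h by auto
          ultimately have "\<not> sameblk (x # P') i' j" unfolding sameblk_def by blast
          then show ?thesis using True by simp
        next
          case False
          have "sameblk (x # P') i' j = sameblk P' (i' - x) (j - x)"
            using sameblk_Cons[OF ne] h False by simp
          also have "\<dots> = (s \<le> j - x \<and> j - x < s + a)"
            by (rule bb) (use h False n in auto)
          also have "\<dots> = (s + x \<le> j \<and> j < s + x + a)" using False by auto
          finally show ?thesis .
        qed
      qed
      then show ?thesis using b False by (intro exI[of _ "s+x"] exI[of _ a]) auto
    qed
  qed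
qed




definition up :: "nat \<Rightarrow> point \<Rightarrow> point" where "up s p = (fst p, snd p + s)"
definition dn :: "nat \<Rightarrow> point \<Rightarrow> point" where "dn s p = (fst p, snd p - s)"
definition upv :: "nat \<Rightarrow> nat \<times> nat \<Rightarrow> nat \<times> nat" where "upv s u = (fst u, snd u + s)"

definition loc :: "nat \<Rightarrow> nat \<Rightarrow> diagram \<Rightarrow> diagram" where
  "loc s a d = {(p,q). snd p < a \<and> snd q < a \<and> (up s p, up s q) \<in> d}"

definition closedb :: "nat \<Rightarrow> nat \<Rightarrow> diagram \<Rightarrow> bool" where
  "closedb s a d = (\<forall>p q. (p,q) \<in> d \<longrightarrow> s \<le> snd p \<longrightarrow> snd p < s + a \<longrightarrow> s \<le> snd q \<and> snd q < s + a)"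

lemma up_dn: "s \<le> snd p \<Longrightarrow> up s (dn s p) = p" by (simp add: up_def dn_def)
lemma snd_dn[simp]: "snd (dn s p) = snd p - s" by (simp add: dn_def)
lemma snd_up[simp]: "snd (up s p) = snd p + s" by (simp add: up_def)
lemma up_inj: "up s p = up s q \<Longrightarrow> p = q" by (simp add: up_def prod_eq_iff)
lemma upv_inj: "upv s p = upv s q \<Longrightarrow> p = q" by (simp add: upv_def prod_eq_iff)
lemma snd_upv[simp]: "snd (upv s u) = snd u + s" by (simp add: upv_def)

lemma emb_up: "embOut (up s p) = upv s (embOut p)" "embA (up s p) = upv s (embA p)" "embB (up s p) = upv s (embB p)"
proof -
  obtain t i where [simp]: "p = (t,i)" by (cases p) auto
  show "embOut (up s p) = upv s (embOut p)" "embA (up s p) = upv s (embA p)" "embB (up s p) = upv s (embB p)"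
    by (cases t; simp add: up_def upv_def)+
qed

lemma bpos_up:
  assumes "snd p < a" "snd q < a" "s + a \<le> n"
  shows "bpos n (up s p) < bpos n (up s q) \<longleftrightarrow> bpos a p < bpos a q"
proof -
  obtain t i where [simp]: "p = (t,i)" by (cases p) auto
  obtain t' j where [simp]: "q = (t',j)" by (cases q) auto
  show ?thesis using assms by (cases t; cases t') (auto simp: up_def)
qed

lemma loc_jones:
  assumes d: "d \<in> jones n" and san: "s + a \<le> n" and cb: "closedb s a d"
  shows "loc s a d \<in> jones a"
proof -
  note P = partner_props[OF d]
  have sub: "loc s a d \<subseteq> pts a \<times> pts a" by (auto simp: loc_def)
  have sy: "sym (loc s a d)" using P(4) by (auto simp: loc_def sym_def)
  have ir: "irrefl (loc s a d)" using P(5) by (auto simp: loc_def irrefl_def)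
  have un: "\<exists>!q. (p,q) \<in> loc s a d" if "p \<in> pts a" for p
  proof -
    have pa: "snd p < a" using that by simp
    then have "up s p \<in> pts n" using san by simp
    then have h: "(up s p, partner d (up s p)) \<in> d" by (rule P(1))
    define q where "q = dn s (partner d (up s p))"
    have "s \<le> snd (partner d (up s p)) \<and> snd (partner d (up s p)) < s + a"
      using cb h pa unfolding closedb_def by fastforce
    then have uq: "up s q = partner d (up s p)" and qa: "snd q < a"
      by (auto simp: q_def up_dn)
    show ?thesis
    proof (rule ex1I[of _ q])
      show "(p,q) \<in> loc s a d" using h uq qa pa by (simp add: loc_def)
    next
      fix q' assume "(p,q') \<in> loc s a d"
      then have "(up s p, up s q') \<in> d" by (simp add: loc_def)
      then have "up s q' = up s q" using P(2) uq by metis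
      then show "q' = q" by (rule up_inj)
    qed
  qed
  have nc: "noncrossing a (loc s a d)"
    unfolding noncrossing_def
  proof (intro allI impI notI)
    fix p1 q1 p2 q2
    assume h1: "(p1,q1) \<in> loc s a d" and h2: "(p2,q2) \<in> loc s a d"
      and c: "bpos a p1 < bpos a p2 \<and> bpos a p2 < bpos a q1 \<and> bpos a q1 < bpos a q2"
    have s: "snd p1 < a" "snd q1 < a" "snd p2 < a" "snd q2 < a" "(up s p1, up s q1) \<in> d" "(up s p2, up s q2) \<in> d"
      using h1 h2 by (auto simp: loc_def)
    have "bpos n (up s p1) < bpos n (up s p2) \<and> bpos n (up s p2) < bpos n (up s q1) \<and> bpos n (up s q1) < bpos n (up s q2)"
      using c bpos_up[OF _ _ san] s by simp
    moreover have "noncrossing n d" using d by (simp add: jones_def)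
    ultimately show False using s unfolding noncrossing_def by blast
  qed
  show ?thesis using sub sy ir un nc by (simp add: jones_def)
qed

lemma R_down:
  assumes cx: "closedb s a x" and cy: "closedb s a y" and ua: "snd u < a"
    and e: "(upv s u, w) \<in> stack_edges x y"
  shows "\<exists>v. w = upv s v \<and> snd v < a \<and> (u,v) \<in> stack_edges (loc s a x) (loc s a y)"
proof -
  have gen: "\<exists>v. w = upv s v \<and> snd v < a \<and> (u,v) \<in> (\<lambda>(p, q). (emb p, emb q)) ` loc s a z"
    if cz: "closedb s a z" and pq: "(p,q) \<in> z" "upv s u = emb p" "w = emb q"
      and embu: "\<And>p. emb (up s p) = upv s (emb p)" and embs: "\<And>p. snd (emb p) = snd p"
    for z p q and emb :: "point \<Rightarrow> nat \<times> nat"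
  proof -
    have sp: "snd p = snd u + s" using pq(2) embs[of p] by (metis snd_upv)
    then have "s \<le> snd p" "snd p < s + a" using ua by auto
    then have sq: "s \<le> snd q" "snd q < s + a" using cz pq(1) unfolding closedb_def by blast+
    define p0 where "p0 = dn s p"
    define q0 where "q0 = dn s q"
    have up0: "up s p0 = p" "up s q0 = q" using sp sq by (auto simp: p0_def q0_def up_dn)
    have l: "(p0,q0) \<in> loc s a z" using up0 pq(1) sp sq ua by (auto simp: loc_def p0_def q0_def)
    have "upv s (emb p0) = upv s u" using pq(2) embu[of p0] up0 by simp
    then have eu: "emb p0 = u" by (rule upv_inj)
    have ew: "w = upv s (emb q0)" using pq(3) embu[of q0] up0 by simp
    have "snd (emb q0) < a" using embs[of q0] sq by (simp add: q0_def)
    moreover have "(u, emb q0) \<in> (\<lambda>(p, q). (emb p, emb q)) ` loc s a z"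
      using l eu by force
    ultimately show ?thesis using ew by blast
  qed
  from e consider (A) p q where "(p,q) \<in> x" "upv s u = embA p" "w = embA q"
    | (B) p q where "(p,q) \<in> y" "upv s u = embB p" "w = embB q"
    by (auto simp: stack_edges_def)
  then show ?thesis
  proof cases
    case A
    from gen[OF cx A emb_up(2) snd_emb(2)] obtain v where
      "w = upv s v" "snd v < a" "(u,v) \<in> (\<lambda>(p,q). (embA p, embA q)) ` loc s a x" by blast
    then show ?thesis unfolding stack_edges_def by blast
  next
    case B
    from gen[OF cy B emb_up(3) snd_emb(3)] obtain v where
      "w = upv s v" "snd v < a" "(u,v) \<in> (\<lambda>(p,q). (embB p, embB q)) ` loc s a y" by blast
    then show ?thesis unfolding stack_edges_def by blast
  qed
qed

lemma R_up:
  assumes "(u,v) \<in> stack_edges (loc s a x) (loc s a y)"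
  shows "(upv s u, upv s v) \<in> stack_edges x y"
proof -
  from assms consider (A) p q where "(p,q) \<in> loc s a x" "u = embA p" "v = embA q"
    | (B) p q where "(p,q) \<in> loc s a y" "u = embB p" "v = embB q"
    by (auto simp: stack_edges_def)
  then show ?thesis
  proof cases
    case A
    then have "(up s p, up s q) \<in> x" by (simp add: loc_def)
    then have "(embA (up s p), embA (up s q)) \<in> stack_edges x y" by (force simp: stack_edges_def)
    then show ?thesis using A by (simp add: emb_up)
  next
    case B
    then have "(up s p, up s q) \<in> y" by (simp add: loc_def)
    then have "(embB (up s p), embB (up s q)) \<in> stack_edges x y" by (force simp: stack_edges_def)
    then show ?thesis using B by (simp add: emb_up)
  qed
qed

lemma rt_down:
  assumes cx: "closedb s a x" and cy: "closedb s a y" and ua: "snd u < a"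
  shows "(upv s u, w) \<in> (stack_edges x y)\<^sup>* \<Longrightarrow>
     \<exists>v. w = upv s v \<and> snd v < a \<and> (u,v) \<in> (stack_edges (loc s a x) (loc s a y))\<^sup>*"
proof (induction rule: rtrancl_induct)
  case base then show ?case using ua by blast
next
  case (step w w')
  then obtain v where v: "w = upv s v" "snd v < a" "(u,v) \<in> (stack_edges (loc s a x) (loc s a y))\<^sup>*" by blast
  with R_down[OF cx cy v(2)] step(2) obtain v' where
    "w' = upv s v'" "snd v' < a" "(v,v') \<in> stack_edges (loc s a x) (loc s a y)" by blast
  then show ?case using v(3) by (blast intro: rtrancl_into_rtrancl)
qed

lemma rt_up:
  "(u,v) \<in> (stack_edges (loc s a x) (loc s a y))\<^sup>* \<Longrightarrow> (upv s u, upv s v) \<in> (stack_edges x y)\<^sup>*"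
proof (induction rule: rtrancl_induct)
  case base then show ?case by auto
next
  case (step v v')
  then show ?case using R_up by (blast intro: rtrancl_into_rtrancl)
qed

lemma loc_sub: "loc s a d \<subseteq> pts a \<times> pts a" by (auto simp: loc_def)

lemma jmult_loc:
  assumes cx: "closedb s a x" and cy: "closedb s a y" and pa: "snd p < a"
  shows "(up s p, q) \<in> jmult x y \<longleftrightarrow> (\<exists>q0. q = up s q0 \<and> snd q0 < a \<and> (p,q0) \<in> jmult (loc s a x) (loc s a y))"
proof
  assume h: "(up s p, q) \<in> jmult x y"
  then have ne: "up s p \<noteq> q" and r: "(upv s (embOut p), embOut q) \<in> (stack_edges x y)\<^sup>*"
    by (auto simp: jmult_def emb_up)
  have pa': "snd (embOut p) < a" using pa by simp
  from rt_down[OF cx cy pa' r] obtain v where v: "embOut q = upv s v" "snd v < a"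
    "(embOut p, v) \<in> (stack_edges (loc s a x) (loc s a y))\<^sup>*" by auto
  define q0 where "q0 = dn s q"
  have sq: "snd q = snd v + s" using v(1) by (metis snd_emb(1) snd_upv)
  have uq: "up s q0 = q" using sq by (simp add: q0_def up_dn)
  have "upv s (embOut q0) = upv s v" using v(1) uq emb_up(1)[of s q0] by simp
  then have eq0: "embOut q0 = v" by (rule upv_inj)
  have "p \<noteq> q0" using ne uq by auto
  then have "(p,q0) \<in> jmult (loc s a x) (loc s a y)" using v(3) eq0 by (simp add: jmult_def)
  moreover have "snd q0 < a" using sq v(2) by (simp add: q0_def)
  ultimately show "\<exists>q0. q = up s q0 \<and> snd q0 < a \<and> (p,q0) \<in> jmult (loc s a x) (loc s a y)"
    using uq by blast
next
  assume "\<exists>q0. q = up s q0 \<and> snd q0 < a \<and> (p,q0) \<in> jmult (loc s a x) (loc s a y)"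
  then obtain q0 where q: "q = up s q0" "(p,q0) \<in> jmult (loc s a x) (loc s a y)" by blast
  then have "p \<noteq> q0" "(embOut p, embOut q0) \<in> (stack_edges (loc s a x) (loc s a y))\<^sup>*"
    by (auto simp: jmult_def)
  then have "up s p \<noteq> up s q0" "(embOut (up s p), embOut (up s q0)) \<in> (stack_edges x y)\<^sup>*"
    using rt_up[of "embOut p" "embOut q0" s a x y] up_inj[of s p q0] by (auto simp: emb_up)
  then show "(up s p, q) \<in> jmult x y" using q by (simp add: jmult_def)
qed

lemma jmult_loc_eq:
  assumes cx: "closedb s a x" and cy: "closedb s a y"
  shows "loc s a (jmult x y) = jmult (loc s a x) (loc s a y)"
proof (rule set_eqI, clarify)
  fix p q
  show "(p,q) \<in> loc s a (jmult x y) \<longleftrightarrow> (p,q) \<in> jmult (loc s a x) (loc s a y)"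
  proof
    assume "(p,q) \<in> loc s a (jmult x y)"
    then have "snd p < a" "(up s p, up s q) \<in> jmult x y" by (auto simp: loc_def)
    then show "(p,q) \<in> jmult (loc s a x) (loc s a y)" using jmult_loc[OF cx cy] up_inj by blast
  next
    assume h: "(p,q) \<in> jmult (loc s a x) (loc s a y)"
    then have "snd p < a" "snd q < a" using jmult_pts[OF loc_sub loc_sub h] by auto
    moreover have "(up s p, up s q) \<in> jmult x y" using jmult_loc[OF cx cy \<open>snd p < a\<close>] h \<open>snd q < a\<close> by blast
    ultimately show "(p,q) \<in> loc s a (jmult x y)" by (simp add: loc_def)
  qed
qed

lemma jmult_closedb:
  assumes cx: "closedb s a x" and cy: "closedb s a y"
  shows "closedb s a (jmult x y)"
  unfolding closedb_def
proof (intro allI impI)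
  fix p q assume h: "(p,q) \<in> jmult x y" "s \<le> snd p" "snd p < s + a"
  have j: "(up s (dn s p), q) \<in> jmult x y" using h by (simp add: up_dn)
  have "snd (dn s p) < a" using h by simp
  then have "\<exists>q0. q = up s q0 \<and> snd q0 < a \<and> (dn s p, q0) \<in> jmult (loc s a x) (loc s a y)"
    using jmult_loc[OF cx cy] j by blast
  then obtain q0 where "q = up s q0" "snd q0 < a" by blast
  then show "s \<le> snd q \<and> snd q < s + a" by simp
qed




lemma blk_eq_or_disj:
  assumes b1: "blk P n s1 a1" and b2: "blk P n s2 a2"
  shows "(s1 = s2 \<and> a1 = a2) \<or> s1 + a1 \<le> s2 \<or> s2 + a2 \<le> s1"
proof (rule ccontr)
  assume c: "\<not> ?thesis"
  have n1: "s1 + a1 \<le> n" "1 \<le> a1" using b1 by (auto simp: blk_def)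
  have n2: "s2 + a2 \<le> n" "1 \<le> a2" using b2 by (auto simp: blk_def)
  define j where "j = max s1 s2"
  have j1: "s1 \<le> j" "j < s1 + a1" and j2: "s2 \<le> j" "j < s2 + a2" using c n1 n2 by (auto simp: j_def)
  have h1: "\<And>k. k < n \<Longrightarrow> sameblk P j k = (s1 \<le> k \<and> k < s1 + a1)"
    using b1 j1 unfolding blk_def by blast
  have h2: "\<And>k. k < n \<Longrightarrow> sameblk P j k = (s2 \<le> k \<and> k < s2 + a2)"
    using b2 j2 unfolding blk_def by blast
  have e: "\<And>k. k < n \<Longrightarrow> (s1 \<le> k \<and> k < s1 + a1) = (s2 \<le> k \<and> k < s2 + a2)"
    using h1 h2 by blast
  have "s1 < n" "s2 < n" "s1 + a1 - 1 < n" "s2 + a2 - 1 < n" using n1 n2 by auto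
  then have f: "(s1 \<le> s1 \<and> s1 < s1 + a1) = (s2 \<le> s1 \<and> s1 < s2 + a2)"
     "(s1 \<le> s2 \<and> s2 < s1 + a1) = (s2 \<le> s2 \<and> s2 < s2 + a2)"
     "(s1 \<le> s1 + a1 - 1 \<and> s1 + a1 - 1 < s1 + a1) = (s2 \<le> s1 + a1 - 1 \<and> s1 + a1 - 1 < s2 + a2)"
     "(s1 \<le> s2 + a2 - 1 \<and> s2 + a2 - 1 < s1 + a1) = (s2 \<le> s2 + a2 - 1 \<and> s2 + a2 - 1 < s2 + a2)"
    using e by blast+
  have t: "s1 \<le> s1 + a1 - 1" "s1 + a1 - 1 < s1 + a1" "s2 \<le> s2 + a2 - 1" "s2 + a2 - 1 < s2 + a2"
    "s1 < s1 + a1" "s2 < s2 + a2" using n1 n2 by auto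
  have g: "s2 \<le> s1" "s1 \<le> s2" "s1 + a1 - 1 < s2 + a2" "s2 + a2 - 1 < s1 + a1"
    using f t by blast+
  have "s1 = s2" using g by simp
  moreover have "a1 = a2" using g n1 n2 by simp
  ultimately show False using c by simp
qed

lemma blk_closedb:
  assumes b: "blk P n s a" and hp: "has_partition P d" and sub: "d \<subseteq> pts n \<times> pts n"
  shows "closedb s a d"
  unfolding closedb_def
proof (intro allI impI)
  fix p q assume h: "(p,q) \<in> d" "s \<le> snd p" "snd p < s + a"
  have "sameblk P (snd p) (snd q)" using hp h(1) unfolding has_partition_def sameblk_def by blast
  moreover have "snd q < n" using sub h(1) by auto
  ultimately show "s \<le> snd q \<and> snd q < s + a" using b h unfolding blk_def by blast
qed

lemma bpos_blk:
  assumes "s \<le> snd p" "snd p < s + a" "s + a \<le> n"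
  shows "(s \<le> bpos n p \<and> bpos n p < s + a) \<or> (2 * n \<le> bpos n p + s + a \<and> bpos n p + s + 1 \<le> 2 * n)"
proof -
  obtain t i where [simp]: "p = (t,i)" by (cases p) auto
  show ?thesis using assms by (cases t) auto
qed

lemma lift:
  assumes cover: "\<forall>i<n. \<exists>s a. blk P n s a \<and> s \<le> i \<and> i < s + a"
    and sub: "d \<subseteq> pts n \<times> pts n" and sy: "sym d" and ir: "irrefl d"
    and loc_ok: "\<And>s a. blk P n s a \<Longrightarrow> closedb s a d \<and> loc s a d \<in> jones a"
  shows "d \<in> jones n \<and> has_partition P d"
proof -
  have blkof: "\<exists>s a. blk P n s a \<and> s \<le> snd p \<and> snd p < s + a" if "p \<in> pts n" for p
    using cover that by simp
  have hp: "has_partition P d"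
    unfolding has_partition_def
  proof (intro allI impI)
    fix p q c assume h: "(p,q) \<in> d" "c \<in> cuts P"
    have "p \<in> pts n" using sub h(1) by auto
    then obtain s a where b: "blk P n s a" "s \<le> snd p" "snd p < s + a" using blkof by blast
    have "s \<le> snd q \<and> snd q < s + a" using loc_ok[OF b(1)] h(1) b unfolding closedb_def by blast
    moreover have "snd q < n" using sub h(1) by auto
    ultimately have "sameblk P (snd p) (snd q)" using b unfolding blk_def by blast
    then show "(snd p < c) = (snd q < c)" using h(2) by (simp add: sameblk_def)
  qed
  have un: "\<exists>!q. (p,q) \<in> d" if pn: "p \<in> pts n" for p
  proof -
    obtain s a where b: "blk P n s a" "s \<le> snd p" "snd p < s + a" using blkof pn by blast
    have cb: "closedb s a d" and lj: "loc s a d \<in> jones a" using loc_ok[OF b(1)] by auto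
    define p0 where "p0 = dn s p"
    have up0: "up s p0 = p" using b by (simp add: p0_def up_dn)
    have "p0 \<in> pts a" using b by (simp add: p0_def)
    then have "(p0, partner (loc s a d) p0) \<in> loc s a d" using partner_props(1)[OF lj] by blast
    then have ex: "(p, up s (partner (loc s a d) p0)) \<in> d" using up0 by (simp add: loc_def)
    show ?thesis
    proof (rule ex1I[of _ "up s (partner (loc s a d) p0)"])
      show "(p, up s (partner (loc s a d) p0)) \<in> d" by (rule ex)
    next
      fix q assume q: "(p,q) \<in> d"
      then have "s \<le> snd q" "snd q < s + a" using cb b unfolding closedb_def by blast+
      then have uq: "up s (dn s q) = q" "snd (dn s q) < a" by (auto simp: up_dn)
      then have "(p0, dn s q) \<in> loc s a d" using q up0 \<open>snd p < s + a\<close> b(2)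
        by (simp add: loc_def p0_def)
      then have "dn s q = partner (loc s a d) p0" using partner_props(2)[OF lj] by blast
      then show "q = up s (partner (loc s a d) p0)" using uq by metis
    qed
  qed
  have nc: "noncrossing n d"
    unfolding noncrossing_def
  proof (intro allI impI notI)
    fix p1 q1 p2 q2
    assume h1: "(p1,q1) \<in> d" and h2: "(p2,q2) \<in> d"
      and c: "bpos n p1 < bpos n p2 \<and> bpos n p2 < bpos n q1 \<and> bpos n q1 < bpos n q2"
    have "p1 \<in> pts n" "p2 \<in> pts n" using sub h1 h2 by auto
    then obtain s1 a1 s2 a2 where b1: "blk P n s1 a1" "s1 \<le> snd p1" "snd p1 < s1 + a1"
      and b2: "blk P n s2 a2" "s2 \<le> snd p2" "snd p2 < s2 + a2" using blkof by meson
    have cb1: "closedb s1 a1 d" and lj1: "loc s1 a1 d \<in> jones a1" using loc_ok[OF b1(1)] by auto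
    have cb2: "closedb s2 a2 d" using loc_ok[OF b2(1)] by auto
    have q1: "s1 \<le> snd q1" "snd q1 < s1 + a1" using cb1 h1 b1 unfolding closedb_def by blast+
    have q2: "s2 \<le> snd q2" "snd q2 < s2 + a2" using cb2 h2 b2 unfolding closedb_def by blast+
    have n1: "s1 + a1 \<le> n" using b1(1) by (simp add: blk_def)
    have n2: "s2 + a2 \<le> n" using b2(1) by (simp add: blk_def)
    from blk_eq_or_disj[OF b1(1) b2(1)]
    show False
    proof (elim disjE conjE)
      assume [simp]: "s1 = s2" "a1 = a2"
      let ?s = s1 and ?a = a1
      have u: "up ?s (dn ?s p1) = p1" "up ?s (dn ?s q1) = q1" "up ?s (dn ?s p2) = p2" "up ?s (dn ?s q2) = q2"
        using b1 b2 q1 q2 by (auto simp: up_dn)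
      have l1: "(dn ?s p1, dn ?s q1) \<in> loc ?s ?a d" using u h1 b1 q1 unfolding loc_def by auto
      have l2: "(dn ?s p2, dn ?s q2) \<in> loc ?s ?a d" using u h2 b2 q2 unfolding loc_def by auto
      have sa: "snd (dn ?s p1) < ?a" "snd (dn ?s q1) < ?a" "snd (dn ?s p2) < ?a" "snd (dn ?s q2) < ?a"
        using b1 b2 q1 q2 by auto
      have "bpos ?a (dn ?s p1) < bpos ?a (dn ?s p2) \<and> bpos ?a (dn ?s p2) < bpos ?a (dn ?s q1)
          \<and> bpos ?a (dn ?s q1) < bpos ?a (dn ?s q2)"
      proof -
        have "bpos n p1 < bpos n p2 \<longleftrightarrow> bpos ?a (dn ?s p1) < bpos ?a (dn ?s p2)"
          using bpos_up[OF sa(1) sa(3) n1] u by simp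
        moreover have "bpos n p2 < bpos n q1 \<longleftrightarrow> bpos ?a (dn ?s p2) < bpos ?a (dn ?s q1)"
          using bpos_up[OF sa(3) sa(2) n1] u by simp
        moreover have "bpos n q1 < bpos n q2 \<longleftrightarrow> bpos ?a (dn ?s q1) < bpos ?a (dn ?s q2)"
          using bpos_up[OF sa(2) sa(4) n1] u by simp
        ultimately show ?thesis using c by simp
      qed
      moreover have "noncrossing ?a (loc ?s ?a d)" using lj1 by (simp add: jones_def)
      ultimately show False using l1 l2 unfolding noncrossing_def by blast
    next
      assume d: "s1 + a1 \<le> s2"
      show False
        using bpos_blk[OF b1(2,3) n1] bpos_blk[OF q1 n1] bpos_blk[OF b2(2,3) n2] bpos_blk[OF q2 n2] c d n1 n2
        by (elim disjE conjE; linarith)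
    next
      assume d: "s2 + a2 \<le> s1"
      show False
        using bpos_blk[OF b1(2,3) n1] bpos_blk[OF q1 n1] bpos_blk[OF b2(2,3) n2] bpos_blk[OF q2 n2] c d n1 n2
        by (elim disjE conjE; linarith)
    qed
  qed
  show ?thesis using sub sy ir un nc hp by (simp add: jones_def)
qed




lemma sym_stack: assumes sx: "sym x" and sy: "sym y" shows "sym (stack_edges x y)"
proof (rule symI)
  fix u v assume "(u,v) \<in> stack_edges x y"
  then consider (A) p q where "(p,q) \<in> x" "u = embA p" "v = embA q"
    | (B) p q where "(p,q) \<in> y" "u = embB p" "v = embB q"
    by (auto simp: stack_edges_def)
  then show "(v,u) \<in> stack_edges x y"
  proof cases
    case A
    then have "(q,p) \<in> x" using sx by (simp add: symD)
    then show ?thesis using A by (force simp: stack_edges_def)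
  next
    case B
    then have "(q,p) \<in> y" using sy by (simp add: symD)
    then show ?thesis using B by (force simp: stack_edges_def)
  qed
qed

lemma jmult_sym:
  assumes "sym x" "sym y" shows "sym (jmult x y)"
proof (rule symI)
  have s: "sym ((stack_edges x y)\<^sup>*)" using sym_stack[OF assms] by (rule sym_rtrancl)
  fix p q assume "(p,q) \<in> jmult x y"
  then have "p \<noteq> q" "(embOut p, embOut q) \<in> (stack_edges x y)\<^sup>*" by (auto simp: jmult_def)
  then have "q \<noteq> p" "(embOut q, embOut p) \<in> (stack_edges x y)\<^sup>*" using symD[OF s] by auto
  then show "(q,p) \<in> jmult x y" by (simp add: jmult_def)
qed

lemma jid_jones: "jid n \<in> jones n"
proof -
  have sub: "jid n \<subseteq> pts n \<times> pts n" by (auto simp: jid_def)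
  have sy: "sym (jid n)" by (auto simp: jid_def sym_def)
  have ir: "irrefl (jid n)" by (auto simp: jid_def irrefl_def)
  have un: "\<exists>!q. (p,q) \<in> jid n" if "p \<in> pts n" for p
  proof -
    obtain t i where p: "p = (t,i)" by (cases p) auto
    show ?thesis
    proof (cases t)
      case Top
      show ?thesis using that p Top by (intro ex1I[of _ "(Bot,i)"]) (auto simp: jid_def)
    next
      case Bot
      show ?thesis using that p Bot by (intro ex1I[of _ "(Top,i)"]) (auto simp: jid_def)
    qed
  qed
  have nc: "noncrossing n (jid n)"
    unfolding noncrossing_def jid_def by auto
  show ?thesis using sub sy ir un nc by (simp add: jones_def)
qed

lemma jid_part: "has_partition P (jid n)"
  by (auto simp: has_partition_def jid_def)

theorem proposition3p2:
  fixes n :: nat and P :: "nat list"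
  assumes "n \<ge> 1"
    and "\<forall>a\<in>set P. 1 \<le> a \<and> a \<le> 3"
    and "sum_list P = n"
  shows "JSMP n P \<subseteq> jones n
     \<and> jid n \<in> JSMP n P
     \<and> (\<forall>x\<in>JSMP n P. \<forall>y\<in>JSMP n P. jmult x y \<in> JSMP n P)
     \<and> (\<forall>x\<in>JSMP n P. jmult x x = x)"
proof -
  have cover: "\<forall>i<n. \<exists>s a. blk P n s a \<and> s \<le> i \<and> i < s + a"
    using blocks_exist[OF assms(2,3)] by blast
  have sub_of: "x \<subseteq> pts n \<times> pts n" if "x \<in> JSMP n P" for x
    using that by (auto simp: JSMP_def jones_def)
  have cb_of: "closedb s a x" if "x \<in> JSMP n P" "blk P n s a" for x s a
    using blk_closedb[OF that(2) _ sub_of[OF that(1)]] that(1) by (simp add: JSMP_def)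
  have lj_of: "loc s a x \<in> jones a" if "x \<in> JSMP n P" "blk P n s a" for x s a
    using loc_jones[of x n s a] cb_of[OF that] that by (auto simp: JSMP_def blk_def)
  have a13: "1 \<le> a \<and> a \<le> 3" if "blk P n s a" for s a using that by (simp add: blk_def)
  have prod: "jmult x y \<in> JSMP n P" if x: "x \<in> JSMP n P" and y: "y \<in> JSMP n P" for x y
  proof -
    have sub: "jmult x y \<subseteq> pts n \<times> pts n"
      using jmult_pts[OF sub_of[OF x] sub_of[OF y]] by auto
    have sy: "sym (jmult x y)" using x y by (intro jmult_sym) (auto simp: JSMP_def jones_def)
    have ir: "irrefl (jmult x y)" by (auto simp: irrefl_def jmult_def)
    have "jmult x y \<in> jones n \<and> has_partition P (jmult x y)"
    proof (rule lift[OF cover sub sy ir])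
      fix s a assume b: "blk P n s a"
      have "closedb s a (jmult x y)" using jmult_closedb[OF cb_of[OF x b] cb_of[OF y b]] .
      moreover have "loc s a (jmult x y) \<in> jones a"
        using jmult_loc_eq[OF cb_of[OF x b] cb_of[OF y b]]
          local_monoid[OF _ _ lj_of[OF x b] lj_of[OF y b]] a13[OF b] by simp
      ultimately show "closedb s a (jmult x y) \<and> loc s a (jmult x y) \<in> jones a" ..
    qed
    then show ?thesis by (simp add: JSMP_def)
  qed
  have idem: "jmult x x = x" if x: "x \<in> JSMP n P" for x
  proof (rule set_eqI, clarify)
    fix p q
    show "(p,q) \<in> jmult x x \<longleftrightarrow> (p,q) \<in> x"
    proof
      assume h: "(p,q) \<in> jmult x x"
      then have "p \<in> pts n" using jmult_pts[OF sub_of[OF x] sub_of[OF x]] by blast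
      then obtain s a where b: "blk P n s a" "s \<le> snd p" "snd p < s + a" using cover by auto
      have cb: "closedb s a x" by (rule cb_of[OF x b(1)])
      have e: "jmult (loc s a x) (loc s a x) = loc s a x"
        using local_monoid[OF _ _ lj_of[OF x b(1)] lj_of[OF x b(1)]] a13[OF b(1)] by simp
      have up: "up s (dn s p) = p" "snd (dn s p) < a" using b by (auto simp: up_dn)
      then have "(up s (dn s p), q) \<in> jmult x x" using h by simp
      then obtain q0 where q0: "q = up s q0" "(dn s p, q0) \<in> jmult (loc s a x) (loc s a x)"
        using jmult_loc[OF cb cb up(2)] by blast
      then have "(dn s p, q0) \<in> loc s a x" using e by simp
      then show "(p,q) \<in> x" using q0 up by (simp add: loc_def)
    next
      assume h: "(p,q) \<in> x"
      then have "p \<in> pts n" using sub_of[OF x] by blast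
      then obtain s a where b: "blk P n s a" "s \<le> snd p" "snd p < s + a" using cover by auto
      have cb: "closedb s a x" by (rule cb_of[OF x b(1)])
      have e: "jmult (loc s a x) (loc s a x) = loc s a x"
        using local_monoid[OF _ _ lj_of[OF x b(1)] lj_of[OF x b(1)]] a13[OF b(1)] by simp
      have qb: "s \<le> snd q" "snd q < s + a" using cb h b unfolding closedb_def by blast+
      have up: "up s (dn s p) = p" "snd (dn s p) < a" "up s (dn s q) = q" "snd (dn s q) < a"
        using b qb by (auto simp: up_dn)
      have "(dn s p, dn s q) \<in> loc s a x" using up h unfolding loc_def by simp
      then have "(dn s p, dn s q) \<in> jmult (loc s a x) (loc s a x)" using e by simp
      then have "(up s (dn s p), up s (dn s q)) \<in> jmult x x"
        using jmult_loc[OF cb cb up(2)] up(4) by blast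
      then show "(p,q) \<in> jmult x x" using up by simp
    qed
  qed
  have "JSMP n P \<subseteq> jones n" by (auto simp: JSMP_def)
  moreover have "jid n \<in> JSMP n P" using jid_jones jid_part by (simp add: JSMP_def)
  ultimately show ?thesis using prod idem by blast
qed



end
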